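(* Fix $n,L\ge1$, $a_0\in\mathbb{R}^L_{++}$ with $\sum_\ell a_{0,\ell}=1$, and vectors $\hat b_\ell=(\hat b_{\ell,0},\dots,\hat b_{\ell,L})\ge0$ ($\ell=1,\dots,L$) with $\hat b_{\ell,0}>0$ and $\sum_{\ell'=0}^L\hat b_{\ell,\ell'}=1$. There exists $\bar\varepsilon>0$ such that, whenever the requirements are $b_\ell=(1-\varepsilon_\ell)\hat b_\ell$ with $\varepsilon_\ell\in(0,\bar\varepsilon)$ for all $\ell$, every $\mathcal{Q}$-clustered structure $a^{\mathcal{Q}}$ (for every partition $\mathcal{Q}$ of $\{1,\dots,n\}$) is a Nash equilibrium of the $n$-fold replicate game $\mathcal{G}^n(a_0,b)$.
   Context: Base game: sectors $0$ (labor) and $1,\dots,L$; household consumption shares $a_0\in\mathbb{R}^L_{++}$, $\sum a_{0,\ell}=1$; sector-$\ell$ requirements $b_\ell=(b_{\ell,0},\dots,b_{\ell,L})\ge0$, $b_{\ell,0}>0$, $\sum_{\ell'}b_{\ell,\ell'}\le1$. The $n$-fold replicate $\mathcal{G}^n(a_0,b)$: firms $M=\{1,\dots,nL\}$, $M_\ell=\{(\ell-1)n+1,\dots,\ell n\}$ (firm $(\ell-1)n+c$ is the sector-$\ell$ firm of country $c\in\{1,\dots,n\}$); household share $a_{0,i}=a_{0,\ell}/n$ for $i\in M_\ell$; every $i\in M_\ell$ has requirement vector $b_\ell$ and $\varepsilon_i=1-\sum_{\ell'}b_{\ell,\ell'}$. Firm $i$ chooses $a_i\in S_i=\{a_i\in\mathbb{R}^{M\cup\{0\}}_+: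 a_{i,0}=b_{\ell,0},\ \sum_{j\in M_{\ell'}}a_{i,j}=b_{\ell,\ell'}\ \forall\ell'\ge1\}$ and receives payoff $\pi_i(a)=\varepsilon_i\bar v_i$, where $\bar v$ solves $\bar v_j=a_{0,j}+a_{0,j}\sum_k\varepsilon_k\bar v_k+\sum_ka_{k,j}\bar v_k$ ($j\in M$), $\sum_ka_{k,0}\bar v_k=1$. For a partition $\mathcal{Q}=\{Q_1,\dots,Q_K\}$ of $\{1,\dots,n\}$ let $Q_{\ell,k}=\{(\ell-1)n+c:c\in Q_k\}$. The $\mathcal{Q}$-clustered structure $a^{\mathcal{Q}}$: for $i\in Q_{\ell,k}$, $a_{i,0}=b_{\ell,0}$, $a_{i,i}=b_{\ell,\ell}$, $a_{i,j}=0$ for $j\in Q_{\ell,k}\setminus\{i\}$, $a_{i,j}=b_{\ell,\ell'}/|Q_k|$ for $j\in Q_{\ell',k}$ with $\ell'\notin\{0,\ell\}$, and $a_{i,j}=0$ otherwise. *)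

theory Defs
  imports Complex_Main "HOL-Library.Disjoint_Sets"
begin

text \<open>Sectors are 1..L (0 = labor).
  Firms are the naturals 1..n*L; firm (l-1)*n+c is the sector-l firm of country c.
  a0 l is the household share of sector l; b l l' is the requirement of sector l
  for input l' (l' = 0 is labor). A strategy profile is a :: nat => nat => real,
  with a i j the share firm i buys from j (j = 0 labor).\<close>

definition firms :: "nat \<Rightarrow> nat \<Rightarrow> nat set" where
  "firms n L = {1..n*L}"

definition sector :: "nat \<Rightarrow> nat \<Rightarrow> nat" where
  "sector n i = (i - 1) div n + 1"

definition country :: "nat \<Rightarrow> nat \<Rightarrow> nat" where
  "country n i = (i - 1) mod n + 1"

definition sector_firms :: "nat \<Rightarrow> nat \<Rightarrow> nat set" where
  "sector_firms n l = {(l - 1) * n + 1 .. l * n}"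

definition hh_share :: "nat \<Rightarrow> (nat \<Rightarrow> real) \<Rightarrow> nat \<Rightarrow> real" where
  "hh_share n a0 j = a0 (sector n j) / real n"

definition firm_eps :: "nat \<Rightarrow> nat \<Rightarrow> (nat \<Rightarrow> nat \<Rightarrow> real) \<Rightarrow> nat \<Rightarrow> real" where
  "firm_eps n L b i = 1 - (\<Sum>l'=0..L. b (sector n i) l')"

definition strat_set :: "nat \<Rightarrow> nat \<Rightarrow> (nat \<Rightarrow> nat \<Rightarrow> real) \<Rightarrow> nat \<Rightarrow> (nat \<Rightarrow> real) set" where
  "strat_set n L b i = {x. (\<forall>j. 0 \<le> x j) \<and> (\<forall>j. j \<notin> insert 0 (firms n L) \<longrightarrow> x j = 0)
      \<and> x 0 = b (sector n i) 0
      \<and> (\<forall>l'\<in>{1..L}. (\<Sum>j\<in>sector_firms n l'. x j) = b (sector n i) l')}"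

definition value_eqs :: "nat \<Rightarrow> nat \<Rightarrow> (nat \<Rightarrow> real) \<Rightarrow> (nat \<Rightarrow> nat \<Rightarrow> real)
    \<Rightarrow> (nat \<Rightarrow> nat \<Rightarrow> real) \<Rightarrow> (nat \<Rightarrow> real) \<Rightarrow> bool" where
  "value_eqs n L a0 b a v \<longleftrightarrow>
     (\<forall>j\<in>firms n L. v j = hh_share n a0 j
         + hh_share n a0 j * (\<Sum>k\<in>firms n L. firm_eps n L b k * v k)
         + (\<Sum>k\<in>firms n L. a k j * v k))
     \<and> (\<Sum>k\<in>firms n L. a k 0 * v k) = 1"

definition vbar :: "nat \<Rightarrow> nat \<Rightarrow> (nat \<Rightarrow> real) \<Rightarrow> (nat \<Rightarrow> nat \<Rightarrow> real)
    \<Rightarrow> (nat \<Rightarrow> nat \<Rightarrow> real) \<Rightarrow> nat \<Rightarrow> real" where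
  "vbar n L a0 b a = (THE v. value_eqs n L a0 b a v \<and> (\<forall>j. j \<notin> firms n L \<longrightarrow> v j = 0))"

definition payoff :: "nat \<Rightarrow> nat \<Rightarrow> (nat \<Rightarrow> real) \<Rightarrow> (nat \<Rightarrow> nat \<Rightarrow> real)
    \<Rightarrow> nat \<Rightarrow> (nat \<Rightarrow> nat \<Rightarrow> real) \<Rightarrow> real" where
  "payoff n L a0 b i a = firm_eps n L b i * vbar n L a0 b a i"

definition nash_eq :: "nat \<Rightarrow> nat \<Rightarrow> (nat \<Rightarrow> real) \<Rightarrow> (nat \<Rightarrow> nat \<Rightarrow> real)
    \<Rightarrow> (nat \<Rightarrow> nat \<Rightarrow> real) \<Rightarrow> bool" where
  "nash_eq n L a0 b a \<longleftrightarrow>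
     (\<forall>i\<in>firms n L. a i \<in> strat_set n L b i) \<and>
     (\<forall>i\<in>firms n L. \<forall>x\<in>strat_set n L b i.
         payoff n L a0 b i (a(i := x)) \<le> payoff n L a0 b i a)"

definition cluster_of :: "nat set set \<Rightarrow> nat \<Rightarrow> nat set" where
  "cluster_of Q c = (THE S. S \<in> Q \<and> c \<in> S)"

definition clustered :: "nat \<Rightarrow> nat \<Rightarrow> (nat \<Rightarrow> nat \<Rightarrow> real) \<Rightarrow> nat set set
    \<Rightarrow> nat \<Rightarrow> nat \<Rightarrow> real" where
  "clustered n L b Q i j =
     (if i \<notin> firms n L then 0
      else if j = 0 then b (sector n i) 0
      else if j = i then b (sector n i) (sector n i)
      else if j \<in> firms n L \<and> sector n j \<noteq> sector n i
              \<and> country n j \<in> cluster_of Q (country n i)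
        then b (sector n i) (sector n j) / real (card (cluster_of Q (country n i)))
      else 0)"

end

theory Submission
  imports Defs
begin


primrec iter :: "nat set \<Rightarrow> (nat\<Rightarrow>real) \<Rightarrow> (nat\<Rightarrow>nat\<Rightarrow>real) \<Rightarrow> nat \<Rightarrow> nat \<Rightarrow> real" where
  "iter S f M 0 = (\<lambda>j. 0)"
| "iter S f M (Suc m) = (\<lambda>j. f j + (\<Sum>k\<in>S. M j k * iter S f M m k))"

lemma iter_mono:
  assumes "\<forall>j\<in>S. f j \<ge> 0" "\<forall>j\<in>S. \<forall>k\<in>S. M j k \<ge> 0"
  shows "\<forall>j\<in>S. 0 \<le> iter S f M m j \<and> iter S f M m j \<le> iter S f M (Suc m) j"
proof (induction m)
  case 0
  then show ?case using assms by (simp add: sum_nonneg)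
next
  case (Suc m)
  show ?case
  proof
    fix j assume j: "j \<in> S"
    have "0 \<le> iter S f M (Suc m) j"
      using Suc j assms by (auto intro!: add_nonneg_nonneg sum_nonneg mult_nonneg_nonneg)
    moreover have "(\<Sum>k\<in>S. M j k * iter S f M m k) \<le> (\<Sum>k\<in>S. M j k * iter S f M (Suc m) k)"
      using Suc j assms by (intro sum_mono mult_left_mono) auto
    ultimately show "0 \<le> iter S f M (Suc m) j \<and> iter S f M (Suc m) j \<le> iter S f M (Suc (Suc m)) j"
      by (simp only: iter.simps) simp
  qed
qed

lemma iter_solve:
  assumes "\<forall>j\<in>S. f j \<ge> 0" "\<forall>j\<in>S. \<forall>k\<in>S. M j k \<ge> 0"
    and bnd: "\<forall>m. \<forall>j\<in>S. iter S f M m j \<le> B"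
  shows "\<exists>y. (\<forall>j\<in>S. y j = f j + (\<Sum>k\<in>S. M j k * y k)) \<and> (\<forall>j\<in>S. 0 \<le> y j)"
proof -
  have lim: "(\<lambda>m. iter S f M m j) \<longlonglongrightarrow> lim (\<lambda>m. iter S f M m j)" if j: "j \<in> S" for j
  proof -
    have "incseq (\<lambda>m. iter S f M m j)"
      using iter_mono[OF assms(1,2)] j by (intro incseq_SucI) auto
    moreover have "\<forall>i. iter S f M i j \<le> B" using bnd j by auto
    ultimately obtain l where "(\<lambda>m. iter S f M m j) \<longlonglongrightarrow> l"
      using incseq_convergent by blast
    then show ?thesis by (simp add: convergent_LIMSEQ_iff[symmetric] convergentI)
  qed
  define y where "y j = lim (\<lambda>m. iter S f M m j)" for j
  have eq: "y j = f j + (\<Sum>k\<in>S. M j k * y k)" if j: "j \<in> S" for j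
  proof -
    have "(\<lambda>m. iter S f M (Suc m) j) \<longlonglongrightarrow> y j"
      using lim[OF j] unfolding y_def by (rule LIMSEQ_Suc)
    moreover have "(\<lambda>m. iter S f M (Suc m) j) \<longlonglongrightarrow> f j + (\<Sum>k\<in>S. M j k * y k)"
      unfolding iter.simps using lim unfolding y_def
      by (intro tendsto_intros) auto
    ultimately show ?thesis by (rule LIMSEQ_unique)
  qed
  have "0 \<le> y j" if j: "j \<in> S" for j
    using lim[OF j] iter_mono[OF assms(1,2)] j unfolding y_def
    by (intro LIMSEQ_le_const[of "\<lambda>m. iter S f M m j"]) auto
  with eq show ?thesis by blast
qed

lemma iter_bound_row:
  assumes "\<forall>j\<in>S. f j \<ge> 0" "\<forall>j\<in>S. \<forall>k\<in>S. M j k \<ge> 0"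
    and "\<forall>j\<in>S. (\<Sum>k\<in>S. M j k) \<le> \<theta>" "\<theta> < 1" "\<forall>j\<in>S. f j \<le> F"
  shows "\<forall>j\<in>S. iter S f M m j \<le> F / (1 - \<theta>)"
proof (cases "S = {}")
  case True then show ?thesis by simp
next
  case False
  then obtain j0 where "j0 \<in> S" by auto
  then have F0: "F \<ge> 0" using assms(1,5) by force
  define B where "B = F / (1 - \<theta>)"
  have B0: "B \<ge> 0" using F0 assms(4) by (simp add: B_def)
  have FB: "F + \<theta> * B = B" using assms(4) by (simp add: B_def field_simps)
  show ?thesis unfolding B_def[symmetric]
  proof (induction m)
    case 0
    then show ?case using B0 by simp
  next
    case (Suc m)
    show ?case
    proof
      fix j assume j: "j \<in> S"
      have "(\<Sum>k\<in>S. M j k * iter S f M m k) \<le> (\<Sum>k\<in>S. M j k * B)"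
        using Suc j assms(2) by (intro sum_mono mult_left_mono) auto
      also have "\<dots> = (\<Sum>k\<in>S. M j k) * B" by (simp add: sum_distrib_right)
      also have "\<dots> \<le> \<theta> * B" using assms(3) j B0 by (intro mult_right_mono) auto
      finally have "f j + (\<Sum>k\<in>S. M j k * iter S f M m k) \<le> F + \<theta> * B"
        using assms(5) j by (meson add_mono)
      then show "iter S f M (Suc m) j \<le> B" using FB by simp
    qed
  qed
qed

lemma iter_bound_col:
  assumes "finite S" "\<forall>j\<in>S. f j \<ge> 0" "\<forall>j\<in>S. \<forall>k\<in>S. M j k \<ge> 0"
    and "\<forall>k\<in>S. (\<Sum>j\<in>S. M j k) \<le> \<theta>" "0 \<le> \<theta>" "\<theta> < 1" "(\<Sum>j\<in>S. f j) \<le> F"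
  shows "\<forall>j\<in>S. iter S f M m j \<le> F / (1 - \<theta>)"
proof -
  define B where "B = F / (1 - \<theta>)"
  have "sum f S \<ge> 0" using assms(2) by (simp add: sum_nonneg)
  then have F0: "F \<ge> 0" using assms(7) by linarith
  have B0: "B \<ge> 0" using F0 assms(6) by (simp add: B_def)
  have FB: "F + \<theta> * B = B" using assms(6) by (simp add: B_def field_simps)
  have nn: "\<forall>j\<in>S. 0 \<le> iter S f M m j" for m using iter_mono[OF assms(2,3)] by blast
  have tot: "(\<Sum>j\<in>S. iter S f M m j) \<le> B" for m
  proof (induction m)
    case 0 then show ?case using B0 by simp
  next
    case (Suc m)
    have "(\<Sum>j\<in>S. iter S f M (Suc m) j) = (\<Sum>j\<in>S. f j) + (\<Sum>j\<in>S. \<Sum>k\<in>S. M j k * iter S f M m k)"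
      by (simp add: sum.distrib)
    also have "(\<Sum>j\<in>S. \<Sum>k\<in>S. M j k * iter S f M m k) = (\<Sum>k\<in>S. (\<Sum>j\<in>S. M j k) * iter S f M m k)"
      by (subst sum.swap) (simp add: sum_distrib_right)
    also have "\<dots> \<le> (\<Sum>k\<in>S. \<theta> * iter S f M m k)"
      using assms(4) nn by (intro sum_mono mult_right_mono) auto
    also have "\<dots> = \<theta> * (\<Sum>k\<in>S. iter S f M m k)" by (simp add: sum_distrib_left)
    also have "\<dots> \<le> \<theta> * B" using Suc assms(5) by (intro mult_left_mono) auto
    finally show ?case using assms(7) FB by linarith
  qed
  show ?thesis unfolding B_def[symmetric]
  proof
    fix j assume j: "j \<in> S"
    have "iter S f M m j \<le> (\<Sum>j\<in>S. iter S f M m j)"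
      using j nn assms(1) by (intro member_le_sum) auto
    then show "iter S f M m j \<le> B" using tot[of m] by linarith
  qed
qed


definition veq :: "nat set \<Rightarrow> (nat \<Rightarrow> real) \<Rightarrow> (nat \<Rightarrow> real) \<Rightarrow> (nat \<Rightarrow> nat \<Rightarrow> real) \<Rightarrow> (nat \<Rightarrow> real) \<Rightarrow> bool" where
  "veq S h e a v \<longleftrightarrow> (\<forall>j\<in>S. v j = h j + h j * (\<Sum>k\<in>S. e k * v k) + (\<Sum>k\<in>S. a k j * v k))
     \<and> (\<Sum>k\<in>S. a k 0 * v k) = 1"

definition goodp :: "nat set \<Rightarrow> (nat \<Rightarrow> real) \<Rightarrow> (nat \<Rightarrow> real) \<Rightarrow> (nat \<Rightarrow> nat \<Rightarrow> real) \<Rightarrow> bool" where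
  "goodp S h e a \<longleftrightarrow> finite S \<and> (\<forall>k\<in>S. \<forall>j\<in>S. 0 \<le> a k j) \<and> (\<forall>k\<in>S. 0 < a k 0) \<and> (\<forall>k\<in>S. 0 \<le> e k)
     \<and> (\<forall>k\<in>S. (\<Sum>j\<in>S. a k j) + a k 0 + e k = 1) \<and> (\<forall>j\<in>S. 0 \<le> h j) \<and> (\<Sum>j\<in>S. h j) = 1"

lemma veq_unique:
  assumes g: "goodp S h e a" and v: "veq S h e a v" and w: "veq S h e a w"
  shows "\<forall>j\<in>S. v j = w j"
proof -
  from g have fin: "finite S" and an: "\<forall>k\<in>S. \<forall>j\<in>S. 0 \<le> a k j" and cp: "\<forall>k\<in>S. 0 < a k 0"
    and en: "\<forall>k\<in>S. 0 \<le> e k" and rs: "\<forall>k\<in>S. (\<Sum>j\<in>S. a k j) + a k 0 + e k = 1"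
    and hn: "\<forall>j\<in>S. 0 \<le> h j" and hs: "(\<Sum>j\<in>S. h j) = 1" unfolding goodp_def by auto
  define d where "d j = v j - w j" for j
  define E where "E = (\<Sum>k\<in>S. e k * d k)"
  have E2: "E = (\<Sum>k\<in>S. e k * v k) - (\<Sum>k\<in>S. e k * w k)"
    unfolding E_def d_def by (simp add: right_diff_distrib sum_subtractf)
  have deq: "d j = h j * E + (\<Sum>k\<in>S. a k j * d k)" if j: "j \<in> S" for j
  proof -
    have A2: "(\<Sum>k\<in>S. a k j * d k) = (\<Sum>k\<in>S. a k j * v k) - (\<Sum>k\<in>S. a k j * w k)"
      unfolding d_def by (simp add: right_diff_distrib sum_subtractf)
    have vj: "v j = h j + h j * (\<Sum>k\<in>S. e k * v k) + (\<Sum>k\<in>S. a k j * v k)"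
      using v j unfolding veq_def by blast
    have wj: "w j = h j + h j * (\<Sum>k\<in>S. e k * w k) + (\<Sum>k\<in>S. a k j * w k)"
      using w j unfolding veq_def by blast
    have hE: "h j * E = h j * (\<Sum>k\<in>S. e k * v k) - h j * (\<Sum>k\<in>S. e k * w k)"
      unfolding E2 by (simp add: right_diff_distrib)
    have dj: "d j = v j - w j" by (simp add: d_def)
    show ?thesis using A2 hE dj vj wj by linarith
  qed
  have dle: "\<bar>d j\<bar> \<le> h j * \<bar>E\<bar> + (\<Sum>k\<in>S. a k j * \<bar>d k\<bar>)" if j: "j \<in> S" for j
  proof -
    have "\<bar>d j\<bar> \<le> \<bar>h j * E\<bar> + \<bar>\<Sum>k\<in>S. a k j * d k\<bar>" using deq[OF j] by (metis abs_triangle_ineq)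
    also have "\<bar>h j * E\<bar> = h j * \<bar>E\<bar>" using hn j by (simp add: abs_mult)
    also have "\<bar>\<Sum>k\<in>S. a k j * d k\<bar> \<le> (\<Sum>k\<in>S. \<bar>a k j * d k\<bar>)" by (rule sum_abs)
    also have "\<dots> = (\<Sum>k\<in>S. a k j * \<bar>d k\<bar>)" using an j by (intro sum.cong) (auto simp: abs_mult)
    finally show ?thesis by simp
  qed
  have "(\<Sum>j\<in>S. \<bar>d j\<bar>) \<le> (\<Sum>j\<in>S. h j * \<bar>E\<bar> + (\<Sum>k\<in>S. a k j * \<bar>d k\<bar>))"
    using dle by (intro sum_mono) auto
  also have "\<dots> = \<bar>E\<bar> + (\<Sum>k\<in>S. (\<Sum>j\<in>S. a k j) * \<bar>d k\<bar>)"
  proof -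
    have "(\<Sum>j\<in>S. h j * \<bar>E\<bar>) = \<bar>E\<bar>" using hs by (simp add: sum_distrib_right[symmetric])
    moreover have "(\<Sum>j\<in>S. \<Sum>k\<in>S. a k j * \<bar>d k\<bar>) = (\<Sum>k\<in>S. (\<Sum>j\<in>S. a k j) * \<bar>d k\<bar>)"
      by (subst sum.swap) (simp add: sum_distrib_right)
    ultimately show ?thesis by (simp add: sum.distrib)
  qed
  also have "\<bar>E\<bar> \<le> (\<Sum>k\<in>S. e k * \<bar>d k\<bar>)"
  proof -
    have "\<bar>E\<bar> \<le> (\<Sum>k\<in>S. \<bar>e k * d k\<bar>)" unfolding E_def by (rule sum_abs)
    also have "\<dots> = (\<Sum>k\<in>S. e k * \<bar>d k\<bar>)" using en by (intro sum.cong) (auto simp: abs_mult)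
    finally show ?thesis .
  qed
  finally have "(\<Sum>j\<in>S. \<bar>d j\<bar>) \<le> (\<Sum>k\<in>S. e k * \<bar>d k\<bar> + (\<Sum>j\<in>S. a k j) * \<bar>d k\<bar>)"
    by (simp add: sum.distrib)
  also have "\<dots> = (\<Sum>k\<in>S. \<bar>d k\<bar> - a k 0 * \<bar>d k\<bar>)"
  proof (intro sum.cong refl)
    fix k assume k: "k \<in> S"
    have "(\<Sum>j\<in>S. a k j) + a k 0 + e k = 1" using rs k by blast
    then have "e k + (\<Sum>j\<in>S. a k j) = 1 - a k 0" by linarith
    then show "e k * \<bar>d k\<bar> + (\<Sum>j\<in>S. a k j) * \<bar>d k\<bar> = \<bar>d k\<bar> - a k 0 * \<bar>d k\<bar>"
      by (metis distrib_right left_diff_distrib mult_1)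
  qed
  finally have le0: "(\<Sum>k\<in>S. a k 0 * \<bar>d k\<bar>) \<le> 0" by (simp add: sum_subtractf)
  have nn: "\<forall>k\<in>S. 0 \<le> a k 0 * \<bar>d k\<bar>" using cp by (simp add: less_imp_le)
  then have "\<forall>k\<in>S. a k 0 * \<bar>d k\<bar> = 0"
    using le0 sum_nonneg_eq_0_iff[OF fin, of "\<lambda>k. a k 0 * \<bar>d k\<bar>"]
    by (simp add: antisym sum_nonneg)
  then show ?thesis using cp unfolding d_def by force
qed


lemma down_exists:
  assumes g: "goodp S h e a"
  shows "\<exists>u. (\<forall>j\<in>S. u j = h j + (\<Sum>k\<in>S. a k j * u k)) \<and> (\<forall>j\<in>S. 0 \<le> u j)"
proof -
  from g have fin: "finite S" and an: "\<forall>k\<in>S. \<forall>j\<in>S. 0 \<le> a k j" and cp: "\<forall>k\<in>S. 0 < a k 0"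
    and en: "\<forall>k\<in>S. 0 \<le> e k" and rs: "\<forall>k\<in>S. (\<Sum>j\<in>S. a k j) + a k 0 + e k = 1"
    and hn: "\<forall>j\<in>S. 0 \<le> h j" and hs: "(\<Sum>j\<in>S. h j) = 1" unfolding goodp_def by auto
  define \<theta> where "\<theta> = Max (insert 0 ((\<lambda>k. \<Sum>j\<in>S. a k j) ` S))"
  have th1: "\<theta> < 1" unfolding \<theta>_def using fin
  proof (subst Max_less_iff, auto)
    fix k assume k: "k \<in> S"
    have "(\<Sum>j\<in>S. a k j) + a k 0 + e k = 1" using rs k by blast
    then show "(\<Sum>j\<in>S. a k j) < 1" using cp en k by force
  qed
  have th0: "0 \<le> \<theta>" unfolding \<theta>_def using fin by (intro Max_ge) auto
  have col: "\<forall>k\<in>S. (\<Sum>j\<in>S. a k j) \<le> \<theta>" unfolding \<theta>_def using fin by (auto intro: Max_ge)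
  have M0: "\<forall>j\<in>S. \<forall>k\<in>S. 0 \<le> (\<lambda>j k. a k j) j k" using an by auto
  have "\<forall>j\<in>S. iter S h (\<lambda>j k. a k j) m j \<le> 1 / (1 - \<theta>)" for m
    using iter_bound_col[OF fin hn M0 _ th0 th1, of 1] col hs by auto
  then show ?thesis using iter_solve[OF hn M0, of "1 / (1 - \<theta>)"] by auto
qed

lemma v_from_u:
  assumes g: "goodp S h e a"
    and u: "\<forall>j\<in>S. u j = h j + (\<Sum>k\<in>S. a k j * u k)" and un: "\<forall>j\<in>S. 0 \<le> u j"
  shows "(\<Sum>k\<in>S. a k 0 * u k) > 0"
    and "veq S h e a (\<lambda>j. if j \<in> S then u j / (\<Sum>k\<in>S. a k 0 * u k) else 0)"
proof -
  from g have fin: "finite S" and an: "\<forall>k\<in>S. \<forall>j\<in>S. 0 \<le> a k j" and cp: "\<forall>k\<in>S. 0 < a k 0"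
    and en: "\<forall>k\<in>S. 0 \<le> e k" and rs: "\<forall>k\<in>S. (\<Sum>j\<in>S. a k j) + a k 0 + e k = 1"
    and hn: "\<forall>j\<in>S. 0 \<le> h j" and hs: "(\<Sum>j\<in>S. h j) = 1" unfolding goodp_def by auto
  define cu where "cu = (\<Sum>k\<in>S. a k 0 * u k)"
  define eu where "eu = (\<Sum>k\<in>S. e k * u k)"
  have "(\<Sum>j\<in>S. u j) = (\<Sum>j\<in>S. h j + (\<Sum>k\<in>S. a k j * u k))" using u by (intro sum.cong) blast+
  also have "\<dots> = 1 + (\<Sum>k\<in>S. (\<Sum>j\<in>S. a k j) * u k)"
  proof -
    have "(\<Sum>j\<in>S. \<Sum>k\<in>S. a k j * u k) = (\<Sum>k\<in>S. (\<Sum>j\<in>S. a k j) * u k)"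
      by (subst sum.swap) (simp add: sum_distrib_right)
    then show ?thesis by (simp add: sum.distrib hs)
  qed
  also have "(\<Sum>k\<in>S. (\<Sum>j\<in>S. a k j) * u k) = (\<Sum>k\<in>S. u k - a k 0 * u k - e k * u k)"
  proof (intro sum.cong refl)
    fix k assume k: "k \<in> S"
    have "(\<Sum>j\<in>S. a k j) + a k 0 + e k = 1" using rs k by blast
    then have "(\<Sum>j\<in>S. a k j) = 1 - a k 0 - e k" by linarith
    then show "(\<Sum>j\<in>S. a k j) * u k = u k - a k 0 * u k - e k * u k" by (simp add: left_diff_distrib)
  qed
  finally have acc0: "(\<Sum>j\<in>S. u j) = 1 + (\<Sum>k\<in>S. u k - a k 0 * u k - e k * u k)" .
  have "(\<Sum>k\<in>S. u k - a k 0 * u k - e k * u k) = (\<Sum>k\<in>S. u k) - cu - eu"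
    unfolding cu_def eu_def by (simp only: sum_subtractf)
  with acc0 have acc: "cu + eu = 1" by linarith
  have cu0: "cu \<ge> 0" unfolding cu_def using cp un by (intro sum_nonneg) (simp add: less_imp_le)
  have eu0: "eu \<ge> 0" unfolding eu_def using en un by (intro sum_nonneg) simp
  have "cu \<noteq> 0"
  proof
    assume "cu = 0"
    moreover have "\<forall>k\<in>S. 0 \<le> a k 0 * u k" using cp un by (simp add: less_imp_le)
    ultimately have z: "\<forall>k\<in>S. a k 0 * u k = 0" unfolding cu_def
      using sum_nonneg_eq_0_iff[OF fin, of "\<lambda>k. a k 0 * u k"] by simp
    have "\<forall>k\<in>S. u k = 0"
    proof
      fix k assume k: "k \<in> S"
      have "a k 0 * u k = 0" using z k by blast
      moreover have "a k 0 \<noteq> 0" using cp k by (metis less_irrefl)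
      ultimately show "u k = 0" by simp
    qed
    then have "eu = 0" unfolding eu_def by (metis (no_types, lifting) mult_zero_right sum.neutral)
    with acc \<open>cu = 0\<close> show False by linarith
  qed
  with cu0 have cpos: "cu > 0" by linarith
  then show "(\<Sum>k\<in>S. a k 0 * u k) > 0" unfolding cu_def .
  define v where "v = (\<lambda>j. if j \<in> S then u j / cu else 0)"
  have s1: "(\<Sum>k\<in>S. e k * v k) = eu / cu"
  proof -
    have "(\<Sum>k\<in>S. e k * v k) = (\<Sum>k\<in>S. e k * u k / cu)" unfolding v_def
      by (intro sum.cong refl) simp
    also have "\<dots> = eu / cu" unfolding eu_def by (simp only: sum_divide_distrib)
    finally show ?thesis .
  qed
  have s0: "(\<Sum>k\<in>S. a k 0 * v k) = 1"
  proof -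
    have "(\<Sum>k\<in>S. a k 0 * v k) = (\<Sum>k\<in>S. a k 0 * u k / cu)" unfolding v_def
      by (intro sum.cong refl) simp
    also have "\<dots> = cu / cu" unfolding cu_def by (simp only: sum_divide_distrib)
    finally show ?thesis using cpos by simp
  qed
  have sj: "(\<Sum>k\<in>S. a k j * v k) = (u j - h j) / cu" if j: "j \<in> S" for j
  proof -
    have "(\<Sum>k\<in>S. a k j * v k) = (\<Sum>k\<in>S. a k j * u k / cu)" unfolding v_def
      by (intro sum.cong refl) simp
    also have "\<dots> = (\<Sum>k\<in>S. a k j * u k) / cu" by (simp only: sum_divide_distrib)
    also have "(\<Sum>k\<in>S. a k j * u k) = u j - h j" using u j by (metis add_diff_cancel_left')
    finally show ?thesis .
  qed
  have eqs: "\<forall>j\<in>S. v j = h j + h j * (\<Sum>k\<in>S. e k * v k) + (\<Sum>k\<in>S. a k j * v k)"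
  proof
    fix j assume j: "j \<in> S"
    have "eu = 1 - cu" using acc by linarith
    have vj: "v j = u j / cu" using j by (simp add: v_def)
    have "h j + h j * ((1 - cu) / cu) + (u j - h j) / cu = u j / cu"
      using cpos by (simp add: field_simps)
    then show "v j = h j + h j * (\<Sum>k\<in>S. e k * v k) + (\<Sum>k\<in>S. a k j * v k)"
      unfolding s1 sj[OF j] vj \<open>eu = 1 - cu\<close> by simp
  qed
  have "veq S h e a v" unfolding veq_def using s0 eqs by blast
  then show "veq S h e a (\<lambda>j. if j \<in> S then u j / (\<Sum>k\<in>S. a k 0 * u k) else 0)"
    by (simp only: v_def cu_def)
qed

lemma value_eqs_veq: "value_eqs n L a0 b a v = veq (firms n L) (hh_share n a0) (firm_eps n L b) a v"
  unfolding value_eqs_def veq_def by simp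

lemma vbar_eq:
  assumes g: "goodp (firms n L) (hh_share n a0) (firm_eps n L b) a"
    and u: "\<forall>j\<in>firms n L. u j = hh_share n a0 j + (\<Sum>k\<in>firms n L. a k j * u k)"
    and un: "\<forall>j\<in>firms n L. 0 \<le> u j"
  shows "vbar n L a0 b a = (\<lambda>j. if j \<in> firms n L then u j / (\<Sum>k\<in>firms n L. a k 0 * u k) else 0)"
proof -
  let ?v = "(\<lambda>j. if j \<in> firms n L then u j / (\<Sum>k\<in>firms n L. a k 0 * u k) else 0)"
  have V: "veq (firms n L) (hh_share n a0) (firm_eps n L b) a ?v" using v_from_u(2)[OF g u un] .
  show ?thesis unfolding vbar_def
  proof (rule the_equality)
    show "value_eqs n L a0 b a ?v \<and> (\<forall>j. j \<notin> firms n L \<longrightarrow> ?v j = 0)"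
      using V value_eqs_veq by auto
  next
    fix w assume w: "value_eqs n L a0 b a w \<and> (\<forall>j. j \<notin> firms n L \<longrightarrow> w j = 0)"
    then have "\<forall>j\<in>firms n L. w j = ?v j"
      using veq_unique[OF g _ V, of w] value_eqs_veq by blast
    with w show "w = ?v" by (intro ext) (metis)
  qed
qed


lemma adjoint:
  fixes a :: "nat \<Rightarrow> nat \<Rightarrow> real" and dl g p f :: "nat \<Rightarrow> real"
  assumes fin: "finite S"
    and d: "\<forall>j\<in>S. dl j = (\<Sum>k\<in>S. a k j * dl k) + g j"
    and p: "\<forall>j\<in>S. p j = f j + (\<Sum>k\<in>S. a j k * p k)"
  shows "(\<Sum>j\<in>S. f j * dl j) = (\<Sum>j\<in>S. p j * g j)"
proof -
  define X where "X = (\<Sum>j\<in>S. \<Sum>k\<in>S. a j k * p k * dl j)"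
  have "(\<Sum>j\<in>S. p j * dl j) = (\<Sum>j\<in>S. (f j + (\<Sum>k\<in>S. a j k * p k)) * dl j)"
    using p by (intro sum.cong refl) (metis)
  also have "\<dots> = (\<Sum>j\<in>S. f j * dl j) + X"
    unfolding X_def by (simp only: distrib_right sum.distrib sum_distrib_right)
  finally have e1: "(\<Sum>j\<in>S. p j * dl j) = (\<Sum>j\<in>S. f j * dl j) + X" .
  have "(\<Sum>j\<in>S. p j * dl j) = (\<Sum>j\<in>S. p j * ((\<Sum>k\<in>S. a k j * dl k) + g j))"
    using d by (intro sum.cong refl) (metis)
  also have "\<dots> = (\<Sum>j\<in>S. \<Sum>k\<in>S. p j * (a k j * dl k)) + (\<Sum>j\<in>S. p j * g j)"
    by (simp add: distrib_left sum.distrib sum_distrib_left)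
  also have "(\<Sum>j\<in>S. \<Sum>k\<in>S. p j * (a k j * dl k)) = X"
    unfolding X_def by (subst sum.swap) (simp add: ac_simps)
  finally have e2: "(\<Sum>j\<in>S. p j * dl j) = X + (\<Sum>j\<in>S. p j * g j)" .
  from e1 e2 show ?thesis by linarith
qed

lemma compare:
  fixes a a' :: "nat \<Rightarrow> nat \<Rightarrow> real" and u u' h p q :: "nat \<Rightarrow> real"
  assumes fin: "finite S" and i: "i \<in> S"
    and same: "\<forall>k\<in>S. k \<noteq> i \<longrightarrow> (\<forall>j. a' k j = a k j)"
    and u: "\<forall>j\<in>S. u j = h j + (\<Sum>k\<in>S. a k j * u k)"
    and u': "\<forall>j\<in>S. u' j = h j + (\<Sum>k\<in>S. a' k j * u' k)"
    and u'i: "0 \<le> u' i"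
    and p: "\<forall>j\<in>S. p j = (if j = i then 1 else 0) + (\<Sum>k\<in>S. a j k * p k)"
    and q: "\<forall>j\<in>S. q j = a j 0 + (\<Sum>k\<in>S. a j k * q k)"
    and hq: "(\<Sum>j\<in>S. q j * (a' i j - a i j)) = 0"
    and hp: "(\<Sum>j\<in>S. p j * (a' i j - a i j)) \<le> 0"
    and a0: "a' i 0 = a i 0"
  shows "u' i \<le> u i" and "(\<Sum>k\<in>S. a' k 0 * u' k) = (\<Sum>k\<in>S. a k 0 * u k)"
proof -
  define dl where "dl j = u' j - u j" for j
  define g where "g j = (a' i j - a i j) * u' i" for j
  have dleq: "\<forall>j\<in>S. dl j = (\<Sum>k\<in>S. a k j * dl k) + g j"
  proof
    fix j assume j: "j \<in> S"
    have "(\<Sum>k\<in>S. a' k j * u' k) - (\<Sum>k\<in>S. a k j * u' k) = (\<Sum>k\<in>S. (a' k j - a k j) * u' k)"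
      by (simp only: left_diff_distrib sum_subtractf)
    also have "\<dots> = (\<Sum>k\<in>S. if k = i then g j else 0)"
      using same unfolding g_def by (intro sum.cong refl) auto
    also have "\<dots> = g j" using i fin by simp
    finally have A: "(\<Sum>k\<in>S. a' k j * u' k) = (\<Sum>k\<in>S. a k j * u' k) + g j" by linarith
    have B: "(\<Sum>k\<in>S. a k j * dl k) = (\<Sum>k\<in>S. a k j * u' k) - (\<Sum>k\<in>S. a k j * u k)"
      unfolding dl_def by (simp add: sum_subtractf right_diff_distrib)
    have "u' j = h j + (\<Sum>k\<in>S. a' k j * u' k)" using u' j by blast
    moreover have "u j = h j + (\<Sum>k\<in>S. a k j * u k)" using u j by blast
    moreover have "dl j = u' j - u j" by (simp add: dl_def)
    ultimately show "dl j = (\<Sum>k\<in>S. a k j * dl k) + g j" using A B by linarith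
  qed
  have "(\<Sum>j\<in>S. (if j = i then 1 else 0) * dl j) = (\<Sum>j\<in>S. p j * g j)"
    by (rule adjoint[OF fin dleq p])
  moreover have "(\<Sum>j\<in>S. (if j = i then 1 else 0) * dl j) = dl i"
  proof -
    have "(\<Sum>j\<in>S. (if j = i then 1 else 0) * dl j) = (\<Sum>j\<in>S. if j = i then dl j else 0)"
      by (intro sum.cong refl) simp
    also have "\<dots> = dl i" using fin i by simp
    finally show ?thesis .
  qed
  moreover have "(\<Sum>j\<in>S. p j * g j) = u' i * (\<Sum>j\<in>S. p j * (a' i j - a i j))"
    unfolding g_def by (simp add: sum_distrib_left ac_simps)
  ultimately have "dl i = u' i * (\<Sum>j\<in>S. p j * (a' i j - a i j))" by simp
  moreover have "u' i * (\<Sum>j\<in>S. p j * (a' i j - a i j)) \<le> 0"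
    using u'i hp by (simp add: mult_nonneg_nonpos)
  ultimately show "u' i \<le> u i" unfolding dl_def by linarith
  have "(\<Sum>j\<in>S. a j 0 * dl j) = (\<Sum>j\<in>S. q j * g j)"
    by (rule adjoint[OF fin dleq q])
  also have "(\<Sum>j\<in>S. q j * g j) = u' i * (\<Sum>j\<in>S. q j * (a' i j - a i j))"
    unfolding g_def by (simp add: sum_distrib_left ac_simps)
  also have "\<dots> = 0" using hq by simp
  finally have z: "(\<Sum>j\<in>S. a j 0 * dl j) = 0" .
  have "(\<Sum>k\<in>S. a' k 0 * u' k) = (\<Sum>k\<in>S. a k 0 * u' k)"
    using same a0 by (intro sum.cong refl) (metis)
  also have "\<dots> = (\<Sum>k\<in>S. a k 0 * u k) + (\<Sum>j\<in>S. a j 0 * dl j)"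
    unfolding dl_def by (simp add: right_diff_distrib sum_subtractf)
  finally show "(\<Sum>k\<in>S. a' k 0 * u' k) = (\<Sum>k\<in>S. a k 0 * u k)" using z by simp
qed



lemma firms_fin: "finite (firms n L)" by (simp add: firms_def)
lemma zero_notin_firms: "0 \<notin> firms n L" by (simp add: firms_def)

lemma firm_sector:
  assumes "n \<ge> 1" "j \<in> firms n L"
  shows "sector n j \<in> {1..L}" "country n j \<in> {1..n}" "j = (sector n j - 1) * n + country n j"
proof -
  from assms have j: "1 \<le> j" "j \<le> n * L" by (auto simp: firms_def)
  have "(j - 1) div n < L" using j assms(1)
    by (metis One_nat_def Suc_le_eq div_less_iff_less_mult less_imp_diff_less mult.commute le_less_trans not_le diff_less zero_less_one)
  then show "sector n j \<in> {1..L}" by (simp add: sector_def)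
  have "(j - 1) mod n < n" using assms(1) by simp
  then show "country n j \<in> {1..n}" by (simp add: country_def)
  show "j = (sector n j - 1) * n + country n j"
    using j by (simp add: sector_def country_def)
qed

lemma firm_mk:
  assumes "n \<ge> 1" "l \<in> {1..L}" "c \<in> {1..n}"
  shows "sector n ((l - 1) * n + c) = l" "country n ((l - 1) * n + c) = c" "(l - 1) * n + c \<in> firms n L"
proof -
  have e: "(l - 1) * n + c - 1 = (l - 1) * n + (c - 1)" using assms by auto
  have cl: "c - 1 < n" using assms by auto
  have d: "((l - 1) * n + (c - 1)) div n = l - 1" using cl by simp
  have m: "((l - 1) * n + (c - 1)) mod n = c - 1" using cl by simp
  show "sector n ((l - 1) * n + c) = l" unfolding sector_def e d using assms by simp
  show "country n ((l - 1) * n + c) = c" unfolding country_def e m using assms by simp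
  have "(l - 1) * n + c \<le> (l - 1) * n + n" using assms by simp
  also have "\<dots> = l * n" using assms by (cases l) auto
  also have "\<dots> \<le> L * n" using assms by simp
  finally show "(l - 1) * n + c \<in> firms n L" using assms by (simp add: firms_def mult.commute)
qed

lemma sector_firms_eq:
  assumes "n \<ge> 1" "l \<in> {1..L}"
  shows "sector_firms n l = {j \<in> firms n L. sector n j = l}"
proof
  show "sector_firms n l \<subseteq> {j \<in> firms n L. sector n j = l}"
  proof
    fix j assume j: "j \<in> sector_firms n l"
    then have j1: "(l - 1) * n + 1 \<le> j" "j \<le> l * n" by (auto simp: sector_firms_def)
    define c where "c = j - (l - 1) * n"
    have c: "c \<in> {1..n}" using j1 assms unfolding c_def by (cases l) auto
    have "j = (l - 1) * n + c" using j1 unfolding c_def by simp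
    then show "j \<in> {j \<in> firms n L. sector n j = l}" using firm_mk[OF assms c] by simp
  qed
next
  show "{j \<in> firms n L. sector n j = l} \<subseteq> sector_firms n l"
  proof
    fix j assume j: "j \<in> {j \<in> firms n L. sector n j = l}"
    then have "j = (l - 1) * n + country n j" "country n j \<in> {1..n}"
      using firm_sector[OF assms(1)] by auto
    moreover have "(l - 1) * n + n = l * n" using assms by (cases l) auto
    ultimately show "j \<in> sector_firms n l" unfolding sector_firms_def by (metis add_le_cancel_left atLeastAtMost_iff le_add1 add_mono le_refl)
  qed
qed

lemma card_sector_cluster:
  assumes "n \<ge> 1" "l \<in> {1..L}" "C \<subseteq> {1..n}"
  shows "card {j \<in> firms n L. sector n j = l \<and> country n j \<in> C} = card C"
proof -
  have "{j \<in> firms n L. sector n j = l \<and> country n j \<in> C} = (\<lambda>c. (l - 1) * n + c) ` C"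
  proof
    show "{j \<in> firms n L. sector n j = l \<and> country n j \<in> C} \<subseteq> (\<lambda>c. (l - 1) * n + c) ` C"
    proof
      fix j assume "j \<in> {j \<in> firms n L. sector n j = l \<and> country n j \<in> C}"
      then show "j \<in> (\<lambda>c. (l - 1) * n + c) ` C" using firm_sector(3)[OF assms(1), of j L] by force
    qed
    show "(\<lambda>c. (l - 1) * n + c) ` C \<subseteq> {j \<in> firms n L. sector n j = l \<and> country n j \<in> C}"
      using firm_mk[OF assms(1,2)] assms(3) by auto
  qed
  moreover have "inj_on (\<lambda>c. (l - 1) * n + c) C" by (auto simp: inj_on_def)
  ultimately show ?thesis by (simp add: card_image)
qed


lemma cluster_props:
  assumes P: "partition_on {1..n} Q" and c: "c \<in> {1..n}"
  shows "cluster_of Q c \<in> Q" "c \<in> cluster_of Q c"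
proof -
  have ex: "\<exists>!S. S \<in> Q \<and> c \<in> S"
  proof -
    have "c \<in> \<Union>Q" using P c unfolding partition_on_def by simp
    then obtain S where "S \<in> Q" "c \<in> S" by blast
    moreover have "S' = S" if "S' \<in> Q" "c \<in> S'" for S'
      using P that \<open>S \<in> Q\<close> \<open>c \<in> S\<close> unfolding partition_on_def disjoint_def by blast
    ultimately show ?thesis by blast
  qed
  show "cluster_of Q c \<in> Q" "c \<in> cluster_of Q c"
    using theI'[OF ex] unfolding cluster_of_def by auto
qed

lemma cluster_unique:
  assumes P: "partition_on {1..n} Q" and "S \<in> Q" "c \<in> S"
  shows "cluster_of Q c = S"
  unfolding cluster_of_def
proof (rule the_equality)
  show "S \<in> Q \<and> c \<in> S" using assms by simp
  show "S' = S" if "S' \<in> Q \<and> c \<in> S'" for S'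
    using P that assms unfolding partition_on_def disjoint_def by blast
qed

lemma cluster_sub:
  assumes P: "partition_on {1..n} Q" and c: "c \<in> {1..n}"
  shows "cluster_of Q c \<subseteq> {1..n}" "finite (cluster_of Q c)" "card (cluster_of Q c) > 0"
proof -
  show s: "cluster_of Q c \<subseteq> {1..n}" using cluster_props(1)[OF P c] P unfolding partition_on_def by auto
  then show f: "finite (cluster_of Q c)" by (rule finite_subset) simp
  show "card (cluster_of Q c) > 0" using f cluster_props(2)[OF P c] card_gt_0_iff by blast
qed

lemma group_row:
  assumes n: "n \<ge> 1" and y: "y \<in> strat_set n L b k"
  shows "(\<Sum>j\<in>firms n L. y j * \<phi> (sector n j)) = (\<Sum>l'=1..L. b (sector n k) l' * \<phi> l')"
proof -
  have "(\<Sum>j\<in>firms n L. y j * \<phi> (sector n j))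
      = (\<Sum>l'\<in>{1..L}. \<Sum>j\<in>{j. j \<in> firms n L \<and> sector n j = l'}. y j * \<phi> (sector n j))"
    using firm_sector(1)[OF n] by (intro sum.group[symmetric]) (auto simp: firms_fin)
  also have "\<dots> = (\<Sum>l'\<in>{1..L}. b (sector n k) l' * \<phi> l')"
  proof (intro sum.cong refl)
    fix l' assume l': "l' \<in> {1..L}"
    have "(\<Sum>j\<in>{j. j \<in> firms n L \<and> sector n j = l'}. y j * \<phi> (sector n j))
        = (\<Sum>j\<in>sector_firms n l'. y j * \<phi> l')"
      using sector_firms_eq[OF n l'] by (intro sum.cong) auto
    also have "\<dots> = (\<Sum>j\<in>sector_firms n l'. y j) * \<phi> l'" by (simp add: sum_distrib_right)
    also have "(\<Sum>j\<in>sector_firms n l'. y j) = b (sector n k) l'" using y l' unfolding strat_set_def by blast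
    finally show "(\<Sum>j\<in>{j. j \<in> firms n L \<and> sector n j = l'}. y j * \<phi> (sector n j)) = b (sector n k) l' * \<phi> l'" .
  qed
  finally show ?thesis .
qed

lemma row_sum:
  assumes n: "n \<ge> 1" and y: "y \<in> strat_set n L b k"
  shows "(\<Sum>j\<in>firms n L. y j) = (\<Sum>l'=1..L. b (sector n k) l')"
  using group_row[OF n y, of "\<lambda>_. 1"] by simp


lemma clustered_entry:
  assumes i: "i \<in> firms n L" and k: "k \<in> firms n L"
  shows "clustered n L b Q i k = (if k = i then b (sector n i) (sector n i)
     else if sector n k \<noteq> sector n i \<and> country n k \<in> cluster_of Q (country n i)
     then b (sector n i) (sector n k) / real (card (cluster_of Q (country n i))) else 0)"
proof -
  have "k \<noteq> 0" using k zero_notin_firms[of n L] by metis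
  then show ?thesis using i k unfolding clustered_def by simp
qed

lemma clustered_strat:
  assumes n: "n \<ge> 1" and P: "partition_on {1..n} Q" and i: "i \<in> firms n L"
    and bnn: "\<forall>l\<in>{1..L}. \<forall>l'\<in>{0..L}. b l l' \<ge> 0"
  shows "clustered n L b Q i \<in> strat_set n L b i"
proof -
  let ?a = "clustered n L b Q i"
  define C where "C = cluster_of Q (country n i)"
  have si: "sector n i \<in> {1..L}" and ci: "country n i \<in> {1..n}" using firm_sector[OF n i] by auto
  have Cs: "C \<subseteq> {1..n}" "card C > 0" using cluster_sub[OF P ci] unfolding C_def by auto
  have nn: "0 \<le> ?a j" for j
  proof (cases "j \<in> firms n L")
    case True
    then have "sector n j \<in> {1..L}" using firm_sector[OF n] by auto
    then show ?thesis using clustered_entry[OF i True, of b Q] bnn si Cs by auto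
  next
    case False
    then show ?thesis using i bnn si unfolding clustered_def by auto
  qed
  have out: "?a j = 0" if "j \<notin> insert 0 (firms n L)" for j
    using that i unfolding clustered_def by auto
  have a0: "?a 0 = b (sector n i) 0" using i unfolding clustered_def by simp
  have sums: "(\<Sum>j\<in>sector_firms n l'. ?a j) = b (sector n i) l'" if l': "l' \<in> {1..L}" for l'
  proof (cases "l' = sector n i")
    case True
    have "(\<Sum>j\<in>sector_firms n l'. ?a j) = (\<Sum>j\<in>{j \<in> firms n L. sector n j = l'}. if j = i then b (sector n i) (sector n i) else 0)"
      unfolding sector_firms_eq[OF n l'] using clustered_entry[OF i, of _ b Q] True
      by (intro sum.cong refl) auto
    also have "\<dots> = b (sector n i) (sector n i)" using i True by (simp add: firms_fin)
    finally show ?thesis using True by simp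
  next
    case False
    have "(\<Sum>j\<in>sector_firms n l'. ?a j) = (\<Sum>j\<in>{j \<in> firms n L. sector n j = l'}. if country n j \<in> C then b (sector n i) l' / real (card C) else 0)"
      unfolding sector_firms_eq[OF n l'] using clustered_entry[OF i, of _ b Q] False unfolding C_def
      by (intro sum.cong refl) auto
    also have "\<dots> = (\<Sum>j\<in>{j \<in> {j \<in> firms n L. sector n j = l'}. country n j \<in> C}. b (sector n i) l' / real (card C))"
      by (rule sum.inter_filter[symmetric]) (simp add: firms_fin)
    also have "\<dots> = (\<Sum>j\<in>{j \<in> firms n L. sector n j = l' \<and> country n j \<in> C}. b (sector n i) l' / real (card C))"
      by (rule sum.cong) auto
    also have "\<dots> = real (card C) * (b (sector n i) l' / real (card C))"
      using card_sector_cluster[OF n l' Cs(1)] by simp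
    also have "\<dots> = b (sector n i) l'" using Cs by simp
    finally show ?thesis .
  qed
  show ?thesis unfolding strat_set_def
    by (intro CollectI conjI allI impI ballI nn out a0 sums) auto
qed


lemma hh_sum:
  assumes n: "n \<ge> 1" and a0s: "(\<Sum>l=1..L. a0 l) = 1"
  shows "(\<Sum>j\<in>firms n L. hh_share n a0 j) = 1"
proof -
  have "(\<Sum>j\<in>firms n L. hh_share n a0 j)
      = (\<Sum>l\<in>{1..L}. \<Sum>j\<in>{j. j \<in> firms n L \<and> sector n j = l}. hh_share n a0 j)"
    using firm_sector(1)[OF n] by (intro sum.group[symmetric]) (auto simp: firms_fin)
  also have "\<dots> = (\<Sum>l\<in>{1..L}. a0 l)"
  proof (intro sum.cong refl)
    fix l assume l: "l \<in> {1..L}"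
    have st: "{j. j \<in> firms n L \<and> sector n j = l} = {j \<in> firms n L. sector n j = l \<and> country n j \<in> {1..n}}"
      using firm_sector(2)[OF n] by blast
    have "(\<Sum>j\<in>{j. j \<in> firms n L \<and> sector n j = l}. hh_share n a0 j)
        = (\<Sum>j\<in>{j. j \<in> firms n L \<and> sector n j = l}. a0 l / real n)"
      unfolding hh_share_def by (intro sum.cong refl) auto
    also have "\<dots> = real n * (a0 l / real n)"
      unfolding st using card_sector_cluster[OF n l, of "{1..n}"] by simp
    also have "\<dots> = a0 l" using n by simp
    finally show "(\<Sum>j\<in>{j. j \<in> firms n L \<and> sector n j = l}. hh_share n a0 j) = a0 l" .
  qed
  finally show ?thesis using a0s by simp
qed

lemma goodp_strat:
  assumes n: "n \<ge> 1"
    and a0p: "\<forall>l\<in>{1..L}. a0 l > 0" and a0s: "(\<Sum>l=1..L. a0 l) = 1"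
    and bnn: "\<forall>l\<in>{1..L}. \<forall>l'\<in>{0..L}. b l l' \<ge> 0"
    and bpos: "\<forall>l\<in>{1..L}. b l 0 > 0"
    and bsum: "\<forall>l\<in>{1..L}. (\<Sum>l'=0..L. b l l') < 1"
    and rows: "\<forall>k\<in>firms n L. a k \<in> strat_set n L b k"
  shows "goodp (firms n L) (hh_share n a0) (firm_eps n L b) a"
proof -
  have sec: "sector n k \<in> {1..L}" if "k \<in> firms n L" for k using firm_sector(1)[OF n that] .
  have an: "\<forall>k\<in>firms n L. \<forall>j\<in>firms n L. 0 \<le> a k j" using rows unfolding strat_set_def by blast
  have ak0: "a k 0 = b (sector n k) 0" if "k \<in> firms n L" for k
    using rows that unfolding strat_set_def by blast
  have cp: "\<forall>k\<in>firms n L. 0 < a k 0" using ak0 bpos sec by auto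
  have en: "\<forall>k\<in>firms n L. 0 \<le> firm_eps n L b k"
    unfolding firm_eps_def using bsum sec by (auto simp: less_imp_le)
  have rs: "\<forall>k\<in>firms n L. (\<Sum>j\<in>firms n L. a k j) + a k 0 + firm_eps n L b k = 1"
  proof
    fix k assume k: "k \<in> firms n L"
    have "(\<Sum>l'=0..L. b (sector n k) l') = b (sector n k) 0 + (\<Sum>l'=Suc 0..L. b (sector n k) l')"
      by (rule sum.atLeast_Suc_atMost) simp
    then show "(\<Sum>j\<in>firms n L. a k j) + a k 0 + firm_eps n L b k = 1"
      using row_sum[OF n] rows k ak0[OF k] unfolding firm_eps_def by simp
  qed
  have hn: "\<forall>j\<in>firms n L. 0 \<le> hh_share n a0 j"
    unfolding hh_share_def using a0p sec by (auto simp: less_imp_le)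
  show ?thesis unfolding goodp_def using firms_fin an cp en rs hn hh_sum[OF n a0s] by blast
qed


lemma sector_q:
  fixes b :: "nat \<Rightarrow> nat \<Rightarrow> real"
  assumes bnn: "\<forall>l\<in>{1..L}. \<forall>l'\<in>{0..L}. b l l' \<ge> 0"
    and bsum: "\<forall>l\<in>{1..L}. (\<Sum>l'=0..L. b l l') < 1"
  shows "\<exists>Qv. \<forall>l\<in>{1..L}. Qv l = b l 0 + (\<Sum>l'\<in>{1..L}. b l l' * Qv l')"
proof -
  define \<theta> where "\<theta> = Max (insert 0 ((\<lambda>l. \<Sum>l'\<in>{1..L}. b l l') ` {1..L}))"
  have sub: "(\<Sum>l'\<in>{1..L}. b l l') \<le> (\<Sum>l'=0..L. b l l')" if l: "l \<in> {1..L}" for l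
    using bnn l by (intro sum_mono2) auto
  have b0: "b l 0 \<le> (\<Sum>l'=0..L. b l l')" if l: "l \<in> {1..L}" for l
    using bnn l by (intro member_le_sum) auto
  have lt: "(\<Sum>l'\<in>{1..L}. b l l') < 1" if l: "l \<in> {1..L}" for l
    using sub[OF l] bsum l by fastforce
  have th1: "\<theta> < 1" unfolding \<theta>_def using lt by (subst Max_less_iff) auto
  have row: "\<forall>l\<in>{1..L}. (\<Sum>l'\<in>{1..L}. b l l') \<le> \<theta>" unfolding \<theta>_def
    by (intro ballI Max_ge) auto
  have f0: "\<forall>l\<in>{1..L}. b l 0 \<ge> 0" using bnn by auto
  have M0: "\<forall>l\<in>{1..L}. \<forall>l'\<in>{1..L}. b l l' \<ge> 0" using bnn by auto
  have fF: "\<forall>l\<in>{1..L}. b l 0 \<le> 1" using b0 bsum by (meson le_less_trans less_imp_le)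
  have "\<forall>m. \<forall>l\<in>{1..L}. iter {1..L} (\<lambda>l. b l 0) b m l \<le> 1 / (1 - \<theta>)"
    using iter_bound_row[OF f0 M0 row th1 fF] by blast
  from iter_solve[OF f0 M0 this] show ?thesis by blast
qed

lemma q_eq:
  fixes b :: "nat \<Rightarrow> nat \<Rightarrow> real" and Qv :: "nat \<Rightarrow> real"
  assumes n: "n \<ge> 1" and j: "j \<in> firms n L" and y: "y \<in> strat_set n L b j"
    and Qv: "\<forall>l\<in>{1..L}. Qv l = b l 0 + (\<Sum>l'\<in>{1..L}. b l l' * Qv l')"
  shows "Qv (sector n j) = y 0 + (\<Sum>k\<in>firms n L. y k * Qv (sector n k))"
proof -
  have "y 0 = b (sector n j) 0" using y unfolding strat_set_def by blast
  moreover have "(\<Sum>k\<in>firms n L. y k * Qv (sector n k)) = (\<Sum>l'=1..L. b (sector n j) l' * Qv l')"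
    by (rule group_row[OF n y])
  ultimately show ?thesis using Qv firm_sector(1)[OF n j] by simp
qed

lemma q_diff:
  fixes b :: "nat \<Rightarrow> nat \<Rightarrow> real" and Qv :: "nat \<Rightarrow> real"
  assumes n: "n \<ge> 1" and x: "x \<in> strat_set n L b i" and y: "y \<in> strat_set n L b i"
  shows "(\<Sum>k\<in>firms n L. Qv (sector n k) * (x k - y k)) = 0"
proof -
  have "(\<Sum>k\<in>firms n L. Qv (sector n k) * (x k - y k))
      = (\<Sum>k\<in>firms n L. x k * Qv (sector n k)) - (\<Sum>k\<in>firms n L. y k * Qv (sector n k))"
    by (simp add: sum_subtractf algebra_simps)
  also have "\<dots> = 0" using group_row[OF n x, of Qv] group_row[OF n y, of Qv] by simp
  finally show ?thesis .
qed


lemma p_max: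
  fixes b :: "nat \<Rightarrow> nat \<Rightarrow> real" and p x :: "nat \<Rightarrow> real"
  assumes n: "n \<ge> 1" and P: "partition_on {1..n} Q" and i: "i \<in> firms n L"
    and bnn: "\<forall>l\<in>{1..L}. \<forall>l'\<in>{0..L}. b l l' \<ge> 0"
    and bsum: "\<forall>l\<in>{1..L}. (\<Sum>l'=0..L. b l l') < 1"
    and pn: "\<forall>j\<in>firms n L. 0 \<le> p j"
    and peq: "\<forall>j\<in>firms n L. p j = (if j = i then 1 else 0) + (\<Sum>k\<in>firms n L. clustered n L b Q j k * p k)"
    and th: "\<forall>j\<in>firms n L. (\<Sum>k\<in>firms n L. clustered n L b Q j k) \<le> \<theta>" "\<theta> < 1"
    and x: "x \<in> strat_set n L b i"
  shows "(\<Sum>j\<in>firms n L. p j * (x j - clustered n L b Q i j)) \<le> 0"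
proof -
  let ?S = "firms n L"
  let ?a = "clustered n L b Q"
  define C where "C = cluster_of Q (country n i)"
  define s where "s = real (card C)"
  have ci: "country n i \<in> {1..n}" and si: "sector n i \<in> {1..L}" using firm_sector[OF n i] by auto
  have CQ: "C \<in> Q" and iC: "country n i \<in> C" using cluster_props[OF P ci] unfolding C_def by auto
  have sec: "sector n j \<in> {1..L}" "country n j \<in> {1..n}" if "j \<in> ?S" for j
    using firm_sector[OF n that] by auto
  have ann: "0 \<le> ?a j k" if "j \<in> ?S" for j k
    using clustered_strat[OF n P that bnn] unfolding strat_set_def by blast
  have bdiag: "b l l < 1" if l: "l \<in> {1..L}" for l
  proof -
    have "b l l \<le> (\<Sum>l'=0..L. b l l')" using bnn l by (intro member_le_sum) auto
    then show ?thesis using bsum l by fastforce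
  qed
  have bnn': "0 \<le> b j k" if "j \<in> {1..L}" "k \<in> {1..L}" for j k using bnn that by auto
  have clC: "cluster_of Q (country n j) = C" if "j \<in> ?S" "country n j \<in> C" for j
    using cluster_unique[OF P CQ that(2)] .
  define T where "T = {j \<in> ?S. country n j \<notin> C}"
  have Tz: "?a j k = 0" if j: "j \<in> T" and k: "k \<in> ?S" "k \<notin> T" for j k
  proof -
    have jS: "j \<in> ?S" and jC: "country n j \<notin> C" using j unfolding T_def by auto
    have kC: "country n k \<in> C" using k unfolding T_def by auto
    define D where "D = cluster_of Q (country n j)"
    have DQ: "D \<in> Q" and jD: "country n j \<in> D" using cluster_props[OF P sec(2)[OF jS]] unfolding D_def by auto
    have "country n k \<notin> D"
    proof
      assume "country n k \<in> D"
      then have "D = C" using P DQ CQ kC unfolding partition_on_def disjoint_def by blast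
      with jD jC show False by simp
    qed
    moreover have "k \<noteq> j" using jC kC by auto
    ultimately show ?thesis using clustered_entry[OF jS k(1), of b Q] unfolding D_def by simp
  qed
  have pT: "p j = 0" if j: "j \<in> T" for j
  proof -
    have finT: "finite T" unfolding T_def using firms_fin by simp
    have TS: "T \<subseteq> ?S" unfolding T_def by auto
    have Tne: "T \<noteq> {}" using j by auto
    define m where "m = Max (p ` T)"
    have pm: "p k \<le> m" if "k \<in> T" for k unfolding m_def using finT that by (intro Max_ge) auto
    have "m \<in> p ` T" unfolding m_def using finT Tne by (intro Max_in) auto
    then obtain j0 where j0: "j0 \<in> T" "p j0 = m" by auto
    have m0: "0 \<le> m" using j0 pn TS by auto
    have "p j0 = (\<Sum>k\<in>?S. ?a j0 k * p k)"
    proof -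
      have "j0 \<noteq> i" using j0 iC unfolding T_def by auto
      then show ?thesis using peq j0 TS by auto
    qed
    also have "\<dots> \<le> (\<Sum>k\<in>?S. ?a j0 k * m)"
    proof (intro sum_mono)
      fix k assume k: "k \<in> ?S"
      show "?a j0 k * p k \<le> ?a j0 k * m"
      proof (cases "k \<in> T")
        case True then show ?thesis using pm ann j0 TS by (intro mult_left_mono) auto
      next
        case False then show ?thesis using Tz[OF j0(1) k False] by simp
      qed
    qed
    also have "\<dots> = (\<Sum>k\<in>?S. ?a j0 k) * m" by (simp add: sum_distrib_right)
    also have "\<dots> \<le> \<theta> * m" using th(1) j0 TS m0 by (intro mult_right_mono) auto
    finally have "m \<le> \<theta> * m" using j0 by simp
    then have "(1 - \<theta>) * m \<le> 0" by (simp add: algebra_simps)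
    then have "m \<le> 0" using th(2) by (simp add: mult_le_0_iff)
    then show ?thesis using pm[OF j] pn j TS m0 by force
  qed
  define R where "R l' = (\<Sum>k\<in>?S. if sector n k \<noteq> l' \<and> country n k \<in> C then b l' (sector n k) / s * p k else 0)" for l'
  have Rn: "0 \<le> R l'" if "l' \<in> {1..L}" for l'
    unfolding R_def s_def using that bnn' sec pn by (intro sum_nonneg) auto
  have dec: "(\<Sum>k\<in>?S. ?a j k * p k) = b (sector n j) (sector n j) * p j + R (sector n j)"
    if j: "j \<in> ?S" "country n j \<in> C" for j
  proof -
    have "(\<Sum>k\<in>?S. ?a j k * p k) = (\<Sum>k\<in>?S. (if k = j then b (sector n j) (sector n j) * p j else 0)
        + (if sector n k \<noteq> sector n j \<and> country n k \<in> C then b (sector n j) (sector n k) / s * p k else 0))"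
    proof (intro sum.cong refl)
      fix k assume k: "k \<in> ?S"
      show "?a j k * p k = (if k = j then b (sector n j) (sector n j) * p j else 0)
        + (if sector n k \<noteq> sector n j \<and> country n k \<in> C then b (sector n j) (sector n k) / s * p k else 0)"
        using clustered_entry[OF j(1) k, of b Q] clC[OF j] unfolding s_def by auto
    qed
    also have "\<dots> = b (sector n j) (sector n j) * p j + R (sector n j)"
      unfolding R_def using j(1) by (simp add: sum.distrib firms_fin)
    finally show ?thesis .
  qed
  have pin: "p j = R (sector n j) / (1 - b (sector n j) (sector n j))"
    if j: "j \<in> ?S" "country n j \<in> C" "j \<noteq> i" for j
  proof -
    have "p j = b (sector n j) (sector n j) * p j + R (sector n j)" using peq dec[OF j(1,2)] j by auto
    moreover have "1 - b (sector n j) (sector n j) > 0" using bdiag[OF sec(1)[OF j(1)]] by simp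
    ultimately show ?thesis by (simp add: field_simps)
  qed
  have pii: "p i = (1 + R (sector n i)) / (1 - b (sector n i) (sector n i))"
  proof -
    have "p i = 1 + (b (sector n i) (sector n i) * p i + R (sector n i))" using peq dec[OF i iC] i by auto
    moreover have "1 - b (sector n i) (sector n i) > 0" using bdiag[OF si] by simp
    ultimately show ?thesis by (simp add: field_simps)
  qed
  define m where "m l' = (if l' = sector n i then p i else R l' / (1 - b l' l'))" for l'
  have mA: "p j \<le> m (sector n j)" if j: "j \<in> ?S" for j
  proof -
    have dpos: "1 - b (sector n j) (sector n j) > 0" using bdiag[OF sec(1)[OF j]] by simp
    have m0: "0 \<le> m (sector n j)"
      unfolding m_def using pn i Rn[OF sec(1)[OF j]] dpos by auto
    show ?thesis
    proof (cases "country n j \<in> C")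
      case False
      then have "j \<in> T" unfolding T_def using j by auto
      then show ?thesis using pT m0 by simp
    next
      case True
      show ?thesis
      proof (cases "j = i")
        case True then show ?thesis unfolding m_def by simp
      next
        case False
        note pj = pin[OF j True False]
        show ?thesis
        proof (cases "sector n j = sector n i")
          case True
          have "R (sector n i) / (1 - b (sector n i) (sector n i)) \<le> (1 + R (sector n i)) / (1 - b (sector n i) (sector n i))"
            using dpos True by (intro divide_right_mono) auto
          then show ?thesis using pj pii True unfolding m_def by simp
        next
          case False then show ?thesis using pj unfolding m_def by simp
        qed
      qed
    qed
  qed
  have mB: "p j = m (sector n j)" if j: "j \<in> ?S" and r: "?a i j \<noteq> 0" for j
  proof (cases "j = i")
    case True then show ?thesis unfolding m_def by simp
  next
    case False
    have "sector n j \<noteq> sector n i \<and> country n j \<in> C"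
      using r clustered_entry[OF i j, of b Q] False unfolding C_def by (auto split: if_splits)
    then show ?thesis using pin[OF j _ False] unfolding m_def by simp
  qed
  have xn: "\<forall>j. 0 \<le> x j" using x unfolding strat_set_def by blast
  have r: "?a i \<in> strat_set n L b i" by (rule clustered_strat[OF n P i bnn])
  have "(\<Sum>j\<in>?S. p j * x j) \<le> (\<Sum>j\<in>?S. x j * m (sector n j))"
  proof (intro sum_mono)
    fix j assume j: "j \<in> ?S"
    have "p j * x j \<le> m (sector n j) * x j" using mA[OF j] xn by (intro mult_right_mono) auto
    then show "p j * x j \<le> x j * m (sector n j)" by (simp add: mult.commute)
  qed
  also have "\<dots> = (\<Sum>l'=1..L. b (sector n i) l' * m l')" by (rule group_row[OF n x])
  also have "\<dots> = (\<Sum>j\<in>?S. ?a i j * m (sector n j))" by (rule group_row[OF n r, symmetric])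
  also have "\<dots> = (\<Sum>j\<in>?S. p j * ?a i j)"
    using mB by (intro sum.cong refl) (metis mult.commute mult_zero_left)
  finally show ?thesis by (simp add: right_diff_distrib sum_subtractf)
qed


lemma p_exists:
  assumes g: "goodp S h e a" and i: "i \<in> S"
  shows "\<exists>\<theta> p. \<theta> < 1 \<and> (\<forall>j\<in>S. (\<Sum>k\<in>S. a j k) \<le> \<theta>) \<and> (\<forall>j\<in>S. 0 \<le> p j)
     \<and> (\<forall>j\<in>S. p j = (if j = i then 1 else 0) + (\<Sum>k\<in>S. a j k * p k))"
proof -
  from g have fin: "finite S" and an: "\<forall>k\<in>S. \<forall>j\<in>S. 0 \<le> a k j" and cp: "\<forall>k\<in>S. 0 < a k 0"
    and en: "\<forall>k\<in>S. 0 \<le> e k" and rs: "\<forall>k\<in>S. (\<Sum>j\<in>S. a k j) + a k 0 + e k = 1"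
    unfolding goodp_def by auto
  define \<theta> where "\<theta> = Max (insert 0 ((\<lambda>k. \<Sum>j\<in>S. a k j) ` S))"
  have lt: "(\<Sum>j\<in>S. a k j) < 1" if k: "k \<in> S" for k
  proof -
    have "(\<Sum>j\<in>S. a k j) + a k 0 + e k = 1" using rs k by blast
    then show ?thesis using cp en k by force
  qed
  have th1: "\<theta> < 1" unfolding \<theta>_def using fin lt by (subst Max_less_iff) auto
  have row: "\<forall>k\<in>S. (\<Sum>j\<in>S. a k j) \<le> \<theta>" unfolding \<theta>_def using fin by (intro ballI Max_ge) auto
  have f0: "\<forall>j\<in>S. (if j = i then 1 else 0::real) \<ge> 0" by simp
  have fF: "\<forall>j\<in>S. (if j = i then 1 else 0::real) \<le> 1" by simp
  have M0: "\<forall>j\<in>S. \<forall>k\<in>S. 0 \<le> a j k" using an by blast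
  have "\<forall>m. \<forall>j\<in>S. iter S (\<lambda>j. if j = i then 1 else 0) a m j \<le> 1 / (1 - \<theta>)"
    using iter_bound_row[OF f0 M0 row th1 fF] by blast
  from iter_solve[OF f0 M0 this] th1 row show ?thesis by blast
qed

theorem mainTheorem10:
  fixes n L :: nat and a0 :: "nat \<Rightarrow> real" and bhat :: "nat \<Rightarrow> nat \<Rightarrow> real"
  assumes "n \<ge> 1" and "L \<ge> 1"
    and "\<forall>l\<in>{1..L}. a0 l > 0"
    and "(\<Sum>l=1..L. a0 l) = 1"
    and "\<forall>l\<in>{1..L}. \<forall>l'\<in>{0..L}. bhat l l' \<ge> 0"
    and "\<forall>l\<in>{1..L}. bhat l 0 > 0"
    and "\<forall>l\<in>{1..L}. (\<Sum>l'=0..L. bhat l l') = 1"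
  shows "\<exists>ebar>0. \<forall>eps :: nat \<Rightarrow> real.
           (\<forall>l\<in>{1..L}. 0 < eps l \<and> eps l < ebar) \<longrightarrow>
           (\<forall>Q. partition_on {1..n} Q \<longrightarrow>
              nash_eq n L a0 (\<lambda>l l'. (1 - eps l) * bhat l l')
                (clustered n L (\<lambda>l l'. (1 - eps l) * bhat l l') Q))"
proof (intro exI[of _ 1] conjI allI impI)
  show "(0::real) < 1" by simp
  fix eps :: "nat \<Rightarrow> real" and Q
  assume eps: "\<forall>l\<in>{1..L}. 0 < eps l \<and> eps l < 1" and P: "partition_on {1..n} Q"
  note n = assms(1)
  define b where "b = (\<lambda>l l'. (1 - eps l) * bhat l l')"
  have bnn: "\<forall>l\<in>{1..L}. \<forall>l'\<in>{0..L}. b l l' \<ge> 0"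
    unfolding b_def using eps assms(5) by (auto intro!: mult_nonneg_nonneg)
  have bpos: "\<forall>l\<in>{1..L}. b l 0 > 0"
    unfolding b_def using eps assms(6) by (auto intro!: mult_pos_pos)
  have bsum: "\<forall>l\<in>{1..L}. (\<Sum>l'=0..L. b l l') < 1"
  proof
    fix l assume l: "l \<in> {1..L}"
    have "(\<Sum>l'=0..L. b l l') = (1 - eps l) * (\<Sum>l'=0..L. bhat l l')"
      unfolding b_def by (simp add: sum_distrib_left)
    also have "\<dots> = 1 - eps l" using assms(7) l by simp
    finally show "(\<Sum>l'=0..L. b l l') < 1" using eps l by simp
  qed
  define a where "a = clustered n L b Q"
  have arow: "\<forall>k\<in>firms n L. a k \<in> strat_set n L b k"
    unfolding a_def using clustered_strat[OF n P _ bnn] by blast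
  have ga: "goodp (firms n L) (hh_share n a0) (firm_eps n L b) a"
    by (rule goodp_strat[OF n assms(3,4) bnn bpos bsum arow])
  have "nash_eq n L a0 b a"
    unfolding nash_eq_def
  proof (intro conjI ballI)
    fix i assume "i \<in> firms n L" then show "a i \<in> strat_set n L b i" using arow by blast
  next
    fix i x assume i: "i \<in> firms n L" and x: "x \<in> strat_set n L b i"
    let ?S = "firms n L"
    define a' where "a' = a(i := x)"
    have arow': "\<forall>k\<in>?S. a' k \<in> strat_set n L b k" unfolding a'_def using arow x by auto
    have ga': "goodp ?S (hh_share n a0) (firm_eps n L b) a'"
      by (rule goodp_strat[OF n assms(3,4) bnn bpos bsum arow'])
    obtain u where u: "\<forall>j\<in>?S. u j = hh_share n a0 j + (\<Sum>k\<in>?S. a k j * u k)" and un: "\<forall>j\<in>?S. 0 \<le> u j"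
      using down_exists[OF ga] by blast
    obtain u' where u': "\<forall>j\<in>?S. u' j = hh_share n a0 j + (\<Sum>k\<in>?S. a' k j * u' k)" and un': "\<forall>j\<in>?S. 0 \<le> u' j"
      using down_exists[OF ga'] by blast
    obtain \<theta> p where th: "\<theta> < 1" "\<forall>j\<in>?S. (\<Sum>k\<in>?S. a j k) \<le> \<theta>" and pn: "\<forall>j\<in>?S. 0 \<le> p j"
      and peq: "\<forall>j\<in>?S. p j = (if j = i then 1 else 0) + (\<Sum>k\<in>?S. a j k * p k)"
      using p_exists[OF ga i] by blast
    obtain Qv where Qv: "\<forall>l\<in>{1..L}. Qv l = b l 0 + (\<Sum>l'\<in>{1..L}. b l l' * Qv l')"
      using sector_q[OF bnn bsum] by blast
    have qeq: "\<forall>j\<in>?S. Qv (sector n j) = a j 0 + (\<Sum>k\<in>?S. a j k * Qv (sector n k))"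
      using q_eq[OF n _ _ Qv] arow by blast
    have hq: "(\<Sum>j\<in>?S. Qv (sector n j) * (a' i j - a i j)) = 0"
      unfolding a'_def using q_diff[OF n x arow[rule_format, OF i]] by simp
    have hp: "(\<Sum>j\<in>?S. p j * (a' i j - a i j)) \<le> 0"
      using p_max[OF n P i bnn bsum pn peq[unfolded a_def] th(2)[unfolded a_def] th(1) x]
      unfolding a'_def a_def by simp
    have x0: "a' i 0 = a i 0"
      unfolding a'_def using x arow i unfolding strat_set_def by auto
    have same: "\<forall>k\<in>?S. k \<noteq> i \<longrightarrow> (\<forall>j. a' k j = a k j)" unfolding a'_def by simp
    have cmp1: "u' i \<le> u i" and cmp2: "(\<Sum>k\<in>?S. a' k 0 * u' k) = (\<Sum>k\<in>?S. a k 0 * u k)"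
      using compare[OF firms_fin i same u u' _ peq qeq hq hp x0] un' i by auto
    have cpos: "(\<Sum>k\<in>?S. a k 0 * u k) > 0" using v_from_u(1)[OF ga u un] .
    have e0: "0 \<le> firm_eps n L b i" using ga i unfolding goodp_def by blast
    have "payoff n L a0 b i a' = firm_eps n L b i * (u' i / (\<Sum>k\<in>?S. a k 0 * u k))"
      unfolding payoff_def vbar_eq[OF ga' u' un'] cmp2 using i by simp
    also have "\<dots> \<le> firm_eps n L b i * (u i / (\<Sum>k\<in>?S. a k 0 * u k))"
      using cmp1 cpos e0 by (intro mult_left_mono divide_right_mono) auto
    also have "\<dots> = payoff n L a0 b i a"
      unfolding payoff_def vbar_eq[OF ga u un] using i by simp
    finally show "payoff n L a0 b i (a(i := x)) \<le> payoff n L a0 b i a" unfolding a'_def .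
  qed
  then show "nash_eq n L a0 (\<lambda>l l'. (1 - eps l) * bhat l l') (clustered n L (\<lambda>l l'. (1 - eps l) * bhat l l') Q)"
    unfolding a_def b_def .
qed


end
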